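(* Let $d\ge3$, $m=d$ and $p_i=1/(d+1)$ for all $i=0,\dots,d$. Then $$\inf\Delta\mu=\underline{\alpha}=\frac{\log(d+1)-\log\zeta}{\log d},\qquad \zeta=\frac{1+\sqrt5}{2},$$ and $\alpha^*=\overline{\alpha}=\frac{\log(d+1)}{\log d}$.
   Context: Given integers $d\ge3$, $m\ge d$ and a positive probability vector $\mathbf p=(p_0,\dots,p_m)$, $\mu$ is the unique compactly supported Borel probability measure with $\mu(A)=\sum_{i=0}^m p_i\,\mu(dA-i)$ for all Borel $A$. Put $\delta=-1/\log d$, $\mathcal A=\{0,\dots,m\}$, $\mathcal A^*$ the set of finite words over $\mathcal A$, $|\sigma|$ the length and $\sigma_j$ the $j$-th letter of $\sigma$. Let $a=1+\lfloor (m-d)/(d-1)\rfloor$, set $p_j=0$ for $j\notin\mathcal A$, and let $M_i$ ($i\in\mathcal A$) be the $(2a+1)\times(2a+1)$ matrix indexed by $\{-a,\dots,a\}^2$ with $M_i(k,l)=p_{k+i-ld}$; $M(\sigma)=M_{\sigma_k}\cdots M_{\sigma_1}$ for $\sigma$ of length $k$; $\rho$ is spectral radius, $\tilde\rho(\mathcal M)=\limsup_{k}\left(\sup\{\rho(A_1\cdots A_k):A_i\in\mathcal M\}\right)^{1/k}$. Set $\underline{\alpha}=\delta\log\tilde\rho(M_0,\dots,M_m)$, $\alpha^*=\delta\log\inf\{\rho(M(\sigma))^{1/|\sigma|}:\sigma\in\mathcal A^*,\ \sigma_1\notin\{0,m\}\}$, $\overline{\alpha}=\delta\log p_0$. $\Delta\mu$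 is the set of values $\dim\mu(x)=\lim_{r\to0^+}\log\mu(B(x,r))/\log r$ over $x\in\operatorname{supp}\mu$ where this limit exists. *)

theory Defs
  imports "HOL-Probability.Probability" "Jordan_Normal_Form.Spectral_Radius"
begin

definition is_ssm :: "nat \<Rightarrow> nat \<Rightarrow> (nat \<Rightarrow> real) \<Rightarrow> real measure \<Rightarrow> bool" where
  "is_ssm d m p \<mu> \<longleftrightarrow> prob_space \<mu> \<and> sets \<mu> = sets borel \<and>
     (\<exists>K. compact K \<and> emeasure \<mu> (UNIV - K) = 0) \<and>
     (\<forall>A \<in> sets borel. measure \<mu> A =
        (\<Sum>i\<le>m. p i * measure \<mu> ((\<lambda>x. real d * x - real i) ` A)))"

definition msupp :: "real measure \<Rightarrow> real set" where
  "msupp \<mu> = {x. \<forall>r>0. measure \<mu> (ball x r) > 0}"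

definition local_dims :: "real measure \<Rightarrow> real set" where
  "local_dims \<mu> = {L. \<exists>x \<in> msupp \<mu>.
      ((\<lambda>r. ln (measure \<mu> (ball x r)) / ln r) \<longlongrightarrow> L) (at_right 0)}"

definition pext :: "nat \<Rightarrow> (nat \<Rightarrow> real) \<Rightarrow> int \<Rightarrow> real" where
  "pext m p j = (if 0 \<le> j \<and> j \<le> int m then p (nat j) else 0)"

definition aa :: "nat \<Rightarrow> nat \<Rightarrow> int" where
  "aa d m = 1 + \<lfloor>(real m - real d) / (real d - 1)\<rfloor>"

text \<open>M_i, indexed by {-a..a}^2; row/column index r corresponds to r - a.\<close>
definition Mi :: "nat \<Rightarrow> nat \<Rightarrow> (nat \<Rightarrow> real) \<Rightarrow> nat \<Rightarrow> complex mat" where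
  "Mi d m p i = (let a = aa d m in
     Matrix.mat (nat (2*a+1)) (nat (2*a+1))
       (\<lambda>(r, s). complex_of_real (pext m p ((int r - a) + int i - (int s - a) * int d))))"

text \<open>M(sigma) = M_{sigma_k} ... M_{sigma_1}, sigma = [sigma_1,...,sigma_k].\<close>
fun Mw :: "nat \<Rightarrow> nat \<Rightarrow> (nat \<Rightarrow> real) \<Rightarrow> nat list \<Rightarrow> complex mat" where
  "Mw d m p [] = 1\<^sub>m (nat (2 * aa d m + 1))"
| "Mw d m p (i # \<sigma>) = Mw d m p \<sigma> * Mi d m p i"

definition rho_tilde :: "nat \<Rightarrow> nat \<Rightarrow> (nat \<Rightarrow> real) \<Rightarrow> real" where
  "rho_tilde d m p = real_of_ereal (limsup (\<lambda>k. ereal (root k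
     (Sup {spectral_radius (Mw d m p \<sigma>) | \<sigma>. length \<sigma> = k \<and> set \<sigma> \<subseteq> {0..m}}))))"

definition alpha_low :: "nat \<Rightarrow> nat \<Rightarrow> (nat \<Rightarrow> real) \<Rightarrow> real" where
  "alpha_low d m p = - ln (rho_tilde d m p) / ln (real d)"

definition alpha_star :: "nat \<Rightarrow> nat \<Rightarrow> (nat \<Rightarrow> real) \<Rightarrow> real" where
  "alpha_star d m p = - ln (Inf {root (length \<sigma>) (spectral_radius (Mw d m p \<sigma>)) | \<sigma>.
       \<sigma> \<noteq> [] \<and> set \<sigma> \<subseteq> {0..m} \<and> hd \<sigma> \<notin> {0, m}}) / ln (real d)"

definition alpha_up :: "nat \<Rightarrow> (nat \<Rightarrow> real) \<Rightarrow> real" where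
  "alpha_up d p = - ln (p 0) / ln (real d)"

end

theory Submission
  imports Defs
begin


fun fb :: "nat \<Rightarrow> nat" where
  "fb 0 = 0" | "fb (Suc 0) = 1" | "fb (Suc (Suc n)) = fb n + fb (Suc n)"

definition zeta :: real where "zeta = (1 + sqrt 5) / 2"

lemma zeta_sq: "zeta ^ 2 = zeta + 1"
  unfolding zeta_def by (simp add: power2_eq_square field_simps)

lemma zeta_bounds: "1 < zeta" "zeta < 2"
proof -
  have "sqrt 5 > 1" by (simp add: real_less_rsqrt)
  moreover have "sqrt 5 < sqrt (3^2)" by (simp only: real_sqrt_less_iff) simp
  moreover have "sqrt 5 < 3" using calculation(2) by simp
  ultimately show "1 < zeta" "zeta < 2" unfolding zeta_def by auto
qed

lemma fb_mono_Suc: "fb n \<le> fb (Suc n)"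
  by (induction n rule: fb.induct) auto

lemma fb_upper: "real (fb (Suc n)) \<le> zeta ^ n"
proof (induction n rule: less_induct)
  case (less n)
  show ?case
  proof (cases n)
    case 0 then show ?thesis by simp
  next
    case (Suc m) note m = this
    show ?thesis
    proof (cases m)
      case 0 then show ?thesis using m zeta_bounds by simp
    next
      case (Suc k)
      have "real (fb (Suc n)) = real (fb (Suc k)) + real (fb (Suc (Suc k)))" using m Suc by simp
      also have "\<dots> \<le> zeta ^ k + zeta ^ (Suc k)"
        by (intro add_mono less) (simp_all add: m Suc)
      also have "\<dots> = zeta ^ k * (zeta + 1)" by (simp add: algebra_simps)
      also have "\<dots> = zeta ^ k * zeta ^ 2" using zeta_sq by simp
      also have "\<dots> = zeta ^ n" using m Suc by (simp add: power_add[symmetric])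
      finally show ?thesis .
    qed
  qed
qed

lemma fb_lower: "zeta ^ n \<le> real (fb (Suc (Suc n)))"
proof (induction n rule: less_induct)
  case (less n)
  show ?case
  proof (cases n)
    case 0 then show ?thesis by simp
  next
    case (Suc m) note m = this
    show ?thesis
    proof (cases m)
      case 0 then show ?thesis using m zeta_bounds by (simp add: numeral_eq_Suc)
    next
      case (Suc k)
      have "zeta ^ n = zeta ^ k * zeta ^ 2" using m Suc by (simp add: power_add[symmetric])
      also have "\<dots> = zeta ^ k * (zeta + 1)" using zeta_sq by simp
      also have "\<dots> = zeta ^ k + zeta ^ (Suc k)" by (simp add: algebra_simps)
      also have "\<dots> \<le> real (fb (Suc (Suc k))) + real (fb (Suc (Suc (Suc k))))"
        by (intro add_mono less) (simp_all add: m Suc)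
      also have "\<dots> = real (fb (Suc (Suc n)))" using m Suc by simp
      finally show ?thesis .
    qed
  qed
qed

definition EE :: "nat \<Rightarrow> nat \<Rightarrow> nat \<Rightarrow> nat \<Rightarrow> real" where
  "EE d i r s = (let j = int r - 1 + int i - (int s - 1) * int d in
      if 0 \<le> j \<and> j \<le> int d then 1 else 0)"

fun Bw :: "nat \<Rightarrow> nat list \<Rightarrow> nat \<Rightarrow> nat \<Rightarrow> real" where
  "Bw d [] r s = (if r = s then 1 else 0)"
| "Bw d (i # \<sigma>) r s = (\<Sum>l<3. Bw d \<sigma> r l * EE d i l s)"

lemma Bw_snoc: "r < 3 \<Longrightarrow> s < 3 \<Longrightarrow> Bw d (\<sigma> @ [i]) r s = (\<Sum>l<3. EE d i r l * Bw d \<sigma> l s)"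
proof (induction \<sigma> arbitrary: s)
  case Nil
  have "(\<Sum>l<3. (if r = l then 1 else 0) * EE d i l s) = (\<Sum>l<3. (if r = l then EE d i l s else 0))"
    by (intro sum.cong) auto
  also have "\<dots> = EE d i r s" using Nil by (simp add: sum.delta)
  also have "\<dots> = (\<Sum>l<3. (if l = s then EE d i r l else 0))" using Nil by (simp add: sum.delta')
  also have "\<dots> = (\<Sum>l<3. EE d i r l * (if l = s then 1 else 0))"
    by (intro sum.cong) auto
  finally show ?case by simp
next
  case (Cons j \<sigma>)
  have "Bw d ((j # \<sigma>) @ [i]) r s = (\<Sum>l<3. Bw d (\<sigma> @ [i]) r l * EE d j l s)" by simp
  also have "\<dots> = (\<Sum>l<3. (\<Sum>l'<3. EE d i r l' * Bw d \<sigma> l' l) * EE d j l s)"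
    using Cons by (intro sum.cong) auto
  also have "\<dots> = (\<Sum>l'<3. EE d i r l' * (\<Sum>l<3. Bw d \<sigma> l' l * EE d j l s))"
    by (simp add: sum_distrib_left sum_distrib_right mult.assoc mult.left_commute) (rule sum.swap)
  finally show ?case by simp
qed

lemma EE_nonneg: "0 \<le> EE d i r s" by (simp add: EE_def Let_def)

lemma Bw_nonneg: "0 \<le> Bw d \<sigma> r s"
  by (induction \<sigma> arbitrary: s) (auto intro!: sum_nonneg mult_nonneg_nonneg simp: EE_nonneg)

lemma Bw_diag: "1 \<le> Bw d \<sigma> 1 1" if "set \<sigma> \<subseteq> {0..d}"
  using that
proof (induction \<sigma>)
  case Nil then show ?case by simp
next
  case (Cons i \<sigma>)
  have "1 \<le> Bw d \<sigma> 1 1 * EE d i 1 1" using Cons by (auto simp: EE_def)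
  also have "\<dots> \<le> (\<Sum>l<3. Bw d \<sigma> 1 l * EE d i l 1)"
    by (rule member_le_sum) (auto intro: mult_nonneg_nonneg Bw_nonneg EE_nonneg)
  finally show ?case by simp
qed



locale ctx =
  fixes d :: nat and p :: "nat \<Rightarrow> real"
  assumes d3: "d \<ge> 3" and pq: "\<And>i. p i = 1 / (real d + 1)"
begin

definition q :: real where "q = 1 / (real d + 1)"

lemma q_pos: "0 < q" and q_less: "q < 1" and zq_less: "zeta * q < 1"
proof -
  show "0 < q" unfolding q_def by simp
  show "q < 1" using d3 unfolding q_def by simp
  have "zeta * q < 2 * (1 / (real d + 1))" using zeta_bounds q_def \<open>0 < q\<close>
    by (simp add: q_def divide_strict_right_mono)
  also have "\<dots> \<le> 1" using d3 by simp
  finally show "zeta * q < 1" .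
qed

lemma aa_dd: "aa d d = 1"
  unfolding aa_def by simp

lemma Mi_eq: "Mi d d p i = mat 3 3 (\<lambda>(r, s). complex_of_real (q * EE d i r s))"
  unfolding Mi_def aa_dd Let_def
  by (rule eq_matI) (auto simp: pext_def EE_def pq q_def Let_def)

lemma Mw_eq: "Mw d d p \<sigma> = mat 3 3 (\<lambda>(r, s). complex_of_real (q ^ length \<sigma> * Bw d \<sigma> r s))"
proof (induction \<sigma>)
  case Nil
  show ?case by (rule eq_matI) (auto simp: aa_dd)
next
  case (Cons i \<sigma>)
  show ?case
  proof (rule eq_matI)
    fix r s assume rs: "r < dim_row (mat 3 3 (\<lambda>(r, s). complex_of_real (q ^ length (i # \<sigma>) * Bw d (i # \<sigma>) r s)))"
      "s < dim_col (mat 3 3 (\<lambda>(r, s). complex_of_real (q ^ length (i # \<sigma>) * Bw d (i # \<sigma>) r s)))"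
    then have r: "r < 3" and s: "s < 3" by auto
    have "Mw d d p (i # \<sigma>) $$ (r, s) = (\<Sum>l\<in>{0..<3}. complex_of_real (q ^ length \<sigma> * Bw d \<sigma> r l) * complex_of_real (q * EE d i l s))"
      using r s by (simp add: Cons Mi_eq scalar_prod_def)
    also have "\<dots> = complex_of_real (\<Sum>l<3. q ^ length \<sigma> * Bw d \<sigma> r l * (q * EE d i l s))"
      by (simp add: atLeast0LessThan)
    also have "\<dots> = complex_of_real (q ^ length (i # \<sigma>) * Bw d (i # \<sigma>) r s)"
      by (simp add: sum_distrib_left algebra_simps)
    finally show "Mw d d p (i # \<sigma>) $$ (r, s) = mat 3 3 (\<lambda>(r, s). complex_of_real (q ^ length (i # \<sigma>) * Bw d (i # \<sigma>) r s)) $$ (r, s)"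
      using r s by simp
  qed (simp_all add: Cons Mi_eq)
qed

lemma Mw_carrier: "Mw d d p \<sigma> \<in> carrier_mat 3 3"
  by (simp add: Mw_eq)

end


lemma sum3: "(\<Sum>l<(3::nat). f l) = f 0 + f 1 + (f 2 :: 'a :: comm_monoid_add)"
  by (simp add: lessThan_nat_numeral add_ac)

lemma less3: "(i::nat) < 3 \<Longrightarrow> i = 0 \<or> i = 1 \<or> i = 2" by arith

lemma ev_rowsum:
  assumes ev: "eigenvector (mat 3 3 (\<lambda>(r, s). complex_of_real (a r s))) v k"
    and nn: "\<And>r s. 0 \<le> a r s"
  shows "\<exists>r<3. cmod k \<le> (\<Sum>s<3. a r s)"
proof -
  let ?A = "mat 3 3 (\<lambda>(r, s). complex_of_real (a r s))"
  from ev have v: "v \<in> carrier_vec 3" "v \<noteq> 0\<^sub>v 3" "?A *\<^sub>v v = k \<cdot>\<^sub>v v"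
    unfolding eigenvector_def by auto
  have fin: "finite ((\<lambda>s. cmod (v $ s)) ` {..<3::nat})" by simp
  obtain r where r: "r < 3" and rmax: "\<And>s. s < 3 \<Longrightarrow> cmod (v $ s) \<le> cmod (v $ r)"
  proof -
    let ?M = "Max ((\<lambda>s. cmod (v $ s)) ` {..<3::nat})"
    have "?M \<in> (\<lambda>s. cmod (v $ s)) ` {..<3::nat}" by (rule Max_in) (simp_all add: lessThan_empty_iff)
    then obtain r where "r < 3" "?M = cmod (v $ r)" by auto
    moreover have "\<And>s. s < 3 \<Longrightarrow> cmod (v $ s) \<le> ?M" by (rule Max_ge) auto
    ultimately show ?thesis using that by auto
  qed
  have vr: "v $ r \<noteq> 0"
  proof
    assume "v $ r = 0"
    then have "\<And>s. s < 3 \<Longrightarrow> v $ s = 0" using rmax by fastforce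
    then have "v = 0\<^sub>v 3" using v(1) by (intro eq_vecI) auto
    with v(2) show False by simp
  qed
  have "(?A *\<^sub>v v) $ r = k * v $ r" using v r by simp
  moreover have "(?A *\<^sub>v v) $ r = (\<Sum>s<3. complex_of_real (a r s) * v $ s)"
  proof -
    have dv: "dim_vec v = 3" using v(1) by simp
    have "(?A *\<^sub>v v) $ r = row ?A r \<bullet> v" using r by simp
    also have "\<dots> = (\<Sum>s\<in>{0..<3}. row ?A r $ s * v $ s)" unfolding scalar_prod_def dv ..
    also have "\<dots> = (\<Sum>s<3. complex_of_real (a r s) * v $ s)"
      using r by (simp add: atLeast0LessThan)
    finally show ?thesis .
  qed
  ultimately have eq: "k * v $ r = (\<Sum>s<3. complex_of_real (a r s) * v $ s)" by simp
  have "cmod k * cmod (v $ r) = cmod (\<Sum>s<3. complex_of_real (a r s) * v $ s)"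
    using eq by (metis norm_mult)
  also have "\<dots> \<le> (\<Sum>s<3. cmod (complex_of_real (a r s) * v $ s))" by (rule norm_sum)
  also have "\<dots> = (\<Sum>s<3. a r s * cmod (v $ s))" using nn by (simp add: norm_mult)
  also have "\<dots> \<le> (\<Sum>s<3. a r s * cmod (v $ r))"
    using rmax nn by (intro sum_mono mult_left_mono) auto
  also have "\<dots> = (\<Sum>s<3. a r s) * cmod (v $ r)" by (simp add: sum_distrib_right)
  finally have "cmod k * cmod (v $ r) \<le> (\<Sum>s<3. a r s) * cmod (v $ r)" .
  then have "cmod k \<le> (\<Sum>s<3. a r s)" using vr by simp
  with r show ?thesis by blast
qed

lemma rho_le_rowsum:
  assumes nn: "\<And>r s. 0 \<le> a r s" and c: "\<And>r. r < 3 \<Longrightarrow> (\<Sum>s<3. a r s) \<le> c"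
  shows "spectral_radius (mat 3 3 (\<lambda>(r, s). complex_of_real (a r s))) \<le> c"
proof -
  let ?A = "mat 3 3 (\<lambda>(r, s). complex_of_real (a r s))"
  have "spectral_radius ?A \<in> norm ` spectrum ?A"
    by (rule spectral_radius_mem_max(1)[of _ 3]) auto
  then obtain k where "eigenvalue ?A k" and rk: "spectral_radius ?A = cmod k"
    unfolding spectrum_def by auto
  then obtain v where "eigenvector ?A v k" unfolding eigenvalue_def by auto
  from ev_rowsum[OF this nn] obtain r where "r < 3" "cmod k \<le> (\<Sum>s<3. a r s)" by auto
  with c rk show ?thesis by force
qed

lemma eigval_le_rho:
  assumes "A \<in> carrier_mat 3 3" "eigenvector A v k"
  shows "cmod k \<le> spectral_radius A"
proof -
  have "eigenvalue A k" using assms unfolding eigenvalue_def by auto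
  then show ?thesis using assms
    by (intro spectral_radius_mem_max(2)[of _ 3]) (auto simp: spectrum_def)
qed

context ctx
begin

definition Inv :: "nat \<Rightarrow> real \<Rightarrow> real \<Rightarrow> real \<Rightarrow> bool" where
  "Inv n x0 x1 x2 \<longleftrightarrow> 0 \<le> x0 \<and> 0 \<le> x1 \<and> 0 \<le> x2 \<and> x0 \<le> fb (Suc n) \<and> x1 \<le> fb (Suc n) \<and> x2 \<le> fb (Suc n)
     \<and> x0 + x1 \<le> fb (Suc (Suc n)) \<and> x1 + x2 \<le> fb (Suc (Suc n))"

lemma Inv_step:
  assumes I: "Inv n x0 x1 x2" and i: "i \<le> d"
  shows "Inv (Suc n) (EE d i 0 0 * x0 + EE d i 0 1 * x1 + EE d i 0 2 * x2)
     (EE d i 1 0 * x0 + EE d i 1 1 * x1 + EE d i 1 2 * x2)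
     (EE d i 2 0 * x0 + EE d i 2 1 * x1 + EE d i 2 2 * x2)"
proof -
  have f3: "real (fb (Suc (Suc (Suc n)))) = fb (Suc n) + fb (Suc (Suc n))" by simp
  have fm: "real (fb (Suc n)) \<le> fb (Suc (Suc n))" using fb_mono_Suc[of "Suc n"] by simp
  consider "i = 0" | "i = 1" | "i + 1 = d" | "i = d" | "2 \<le> i \<and> i + 2 \<le> d" using i d3 by linarith
  then show ?thesis
  proof cases
    case 1 then show ?thesis using I d3 f3 fm by (simp add: EE_def Inv_def)
  next
    case 2 then show ?thesis using I d3 f3 fm by (simp add: EE_def Inv_def)
  next
    case 3 then show ?thesis using I d3 f3 fm by (auto simp: EE_def Inv_def)
  next
    case 4 then show ?thesis using I d3 f3 fm by (simp add: EE_def Inv_def)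
  next
    case 5 then show ?thesis using I d3 f3 fm by (auto simp: EE_def Inv_def)
  qed
qed


lemma Bw_Inv:
  assumes "set \<sigma> \<subseteq> {0..d}" and s: "s < 3"
  shows "Inv (length \<sigma>) (Bw d \<sigma> 0 s) (Bw d \<sigma> 1 s) (Bw d \<sigma> 2 s)"
  using assms(1)
proof (induction \<sigma> rule: rev_induct)
  case Nil then show ?case by (auto simp: Inv_def)
next
  case (snoc i \<sigma>)
  then have IH: "Inv (length \<sigma>) (Bw d \<sigma> 0 s) (Bw d \<sigma> 1 s) (Bw d \<sigma> 2 s)" and i: "i \<le> d" by auto
  show ?case using Inv_step[OF IH i] s by (simp add: Bw_snoc sum3)
qed

lemma Bw_le: "set \<sigma> \<subseteq> {0..d} \<Longrightarrow> r < 3 \<Longrightarrow> s < 3 \<Longrightarrow> Bw d \<sigma> r s \<le> fb (Suc (length \<sigma>))"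
proof -
  assume a: "set \<sigma> \<subseteq> {0..d}" "r < 3" "s < 3"
  then have "r = 0 \<or> r = 1 \<or> r = 2" by arith
  then show ?thesis using Bw_Inv[OF a(1) a(3)] by (auto simp: Inv_def)
qed

lemma rho_upper:
  assumes "set \<sigma> \<subseteq> {0..d}"
  shows "spectral_radius (Mw d d p \<sigma>) \<le> 3 * (zeta * q) ^ length \<sigma>"
proof -
  have "spectral_radius (Mw d d p \<sigma>) \<le> 3 * (fb (Suc (length \<sigma>)) * q ^ length \<sigma>)"
    unfolding Mw_eq
  proof (rule rho_le_rowsum)
    fix r s :: nat show "0 \<le> q ^ length \<sigma> * Bw d \<sigma> r s" using q_pos Bw_nonneg by simp
  next
    fix r :: nat assume r: "r < 3"
    have "(\<Sum>s<3. q ^ length \<sigma> * Bw d \<sigma> r s) \<le> (\<Sum>s<(3::nat). fb (Suc (length \<sigma>)) * q ^ length \<sigma>)"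
      using Bw_le[OF assms r] q_pos by (intro sum_mono) (simp add: mult.commute)
    then show "(\<Sum>s<3. q ^ length \<sigma> * Bw d \<sigma> r s) \<le> 3 * (fb (Suc (length \<sigma>)) * q ^ length \<sigma>)"
      by simp
  qed
  also have "\<dots> \<le> 3 * (zeta ^ length \<sigma> * q ^ length \<sigma>)"
    using fb_upper q_pos by (intro mult_left_mono mult_right_mono) auto
  finally show ?thesis by (simp add: power_mult_distrib)
qed

lemma rho_one: "spectral_radius (Mw d d p [1]) \<le> q"
proof -
  let ?A = "Mw d d p [1]"
  have A: "?A \<in> carrier_mat 3 3" by (rule Mw_carrier)
  have "spectral_radius ?A \<in> norm ` spectrum ?A"
    by (rule spectral_radius_mem_max(1)[OF A]) auto
  then obtain k where "eigenvalue ?A k" and rk: "spectral_radius ?A = cmod k"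
    unfolding spectrum_def by auto
  then obtain v where ev: "eigenvector ?A v k" unfolding eigenvalue_def by auto
  then have v: "v \<in> carrier_vec 3" "v \<noteq> 0\<^sub>v 3" "?A *\<^sub>v v = k \<cdot>\<^sub>v v"
    using A unfolding eigenvector_def by auto
  have dv: "dim_vec v = 3" using v(1) by simp
  have row: "(?A *\<^sub>v v) $ r = (\<Sum>s<3. complex_of_real (q * Bw d [1] r s) * v $ s)" if "r < 3" for r
  proof -
    have "(?A *\<^sub>v v) $ r = row ?A r \<bullet> v" using that A by (simp del: Mw.simps)
    also have "\<dots> = (\<Sum>s\<in>{0..<3}. row ?A r $ s * v $ s)" unfolding scalar_prod_def dv ..
    also have "\<dots> = (\<Sum>s<3. complex_of_real (q * Bw d [1] r s) * v $ s)"
      using that by (simp add: atLeast0LessThan Mw_eq del: Mw.simps)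
    finally show ?thesis .
  qed
  have e0: "k * v $ 0 = q * (v $ 0 + v $ 1)"
    using row[of 0] v(3) d3 dv by (simp add: sum3 EE_def algebra_simps)
  have e1: "k * v $ 1 = q * v $ 1"
    using row[of 1] v(3) d3 dv by (simp add: sum3 EE_def algebra_simps)
  have e2: "k * v $ 2 = q * v $ 1"
    using row[of 2] v(3) d3 dv by (simp add: sum3 EE_def algebra_simps)
  have "k = q \<or> k = 0"
  proof (cases "v $ 1 = 0")
    case False then show ?thesis using e1 by simp
  next
    case True
    show ?thesis
    proof (cases "v $ 0 = 0")
      case False then show ?thesis using e0 True by simp
    next
      case False2: True
      have "v $ 2 \<noteq> 0"
      proof
        assume "v $ 2 = 0"
        then have "v = 0\<^sub>v 3" using True False2 v(1)
          by (intro eq_vecI) (auto dest!: less3)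
        with v(2) show False by simp
      qed
      then show ?thesis using e2 True by simp
    qed
  qed
  then show ?thesis using rk q_pos by auto
qed

end


lemma mat3_mult: "mat 3 3 (\<lambda>(r, s). complex_of_real (f r s)) * mat 3 3 (\<lambda>(r, s). complex_of_real (g r s))
   = mat 3 3 (\<lambda>(r, s). complex_of_real (\<Sum>l<3. f r l * g l s))"
  by (rule eq_matI) (auto simp: scalar_prod_def atLeast0LessThan)

lemma mat3_mult_vec: "v \<in> carrier_vec 3 \<Longrightarrow> r < 3 \<Longrightarrow>
   (mat 3 3 (\<lambda>(r, s). complex_of_real (f r s)) *\<^sub>v v) $ r = (\<Sum>s<3. complex_of_real (f r s) * v $ s)"
  by (auto simp: scalar_prod_def atLeast0LessThan)

lemma mat3_pow:
  assumes nn: "\<And>r s. 0 \<le> a r s" and t: "0 \<le> t" "t \<le> a 1 1"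
  shows "\<exists>g. mat 3 3 (\<lambda>(r, s). complex_of_real (a r s)) ^\<^sub>m k = mat 3 3 (\<lambda>(r, s). complex_of_real (g r s))
     \<and> (\<forall>r s. 0 \<le> g r s) \<and> t ^ k \<le> g 1 1"
proof (induction k)
  case 0
  show ?case
    by (rule exI[of _ "\<lambda>r s. if r = s then 1 else 0"]) (auto intro!: eq_matI)
next
  case (Suc k)
  then obtain g where g: "mat 3 3 (\<lambda>(r, s). complex_of_real (a r s)) ^\<^sub>m k = mat 3 3 (\<lambda>(r, s). complex_of_real (g r s))"
    "\<forall>r s. 0 \<le> g r s" "t ^ k \<le> g 1 1" by auto
  have "t ^ Suc k \<le> g 1 1 * a 1 1" using g t by (simp add: mult_mono mult.commute)
  also have "\<dots> \<le> (\<Sum>l<3. g 1 l * a l 1)"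
    by (rule member_le_sum[where f = "\<lambda>l. g 1 l * a l 1"]) (use g nn in auto)
  finally show ?case using g nn
    by (intro exI[of _ "\<lambda>r s. \<Sum>l<3. g r l * a l s"]) (auto simp: mat3_mult intro!: sum_nonneg)
qed

context ctx begin

lemma rho_lower:
  assumes \<sigma>: "set \<sigma> \<subseteq> {0..d}"
  shows "q ^ length \<sigma> \<le> spectral_radius (Mw d d p \<sigma>)"
proof (rule ccontr)
  let ?n = "length \<sigma>"
  let ?A = "Mw d d p \<sigma>"
  assume "\<not> ?thesis"
  then have lt: "spectral_radius ?A < q ^ ?n" by simp
  have A: "?A \<in> carrier_mat 3 3" by (rule Mw_carrier)
  have "spectral_radius ?A \<in> norm ` spectrum ?A"
    by (rule spectral_radius_mem_max(1)[OF A]) auto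
  then have r0: "0 \<le> spectral_radius ?A" by auto
  define rp where "rp = (spectral_radius ?A + q ^ ?n) / 2"
  have rp: "0 < rp" "spectral_radius ?A < rp" "rp < q ^ ?n" using lt r0 unfolding rp_def by auto
  define t where "t = q ^ ?n / rp"
  have t1: "1 < t" using rp unfolding t_def by simp
  define C where "C = mat 3 3 (\<lambda>(r, s). complex_of_real (t * Bw d \<sigma> r s))"
  have C: "C \<in> carrier_mat 3 3" unfolding C_def by simp
  have "spectral_radius C < 1"
  proof -
    have "spectral_radius C \<in> norm ` spectrum C"
      by (rule spectral_radius_mem_max(1)[OF C]) auto
    then obtain k where "eigenvalue C k" and rk: "spectral_radius C = cmod k"
      unfolding spectrum_def by auto
    then obtain v where ev: "eigenvector C v k" unfolding eigenvalue_def by auto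
    then have v: "v \<in> carrier_vec 3" "v \<noteq> 0\<^sub>v 3" "C *\<^sub>v v = k \<cdot>\<^sub>v v"
      using C unfolding eigenvector_def by auto
    have "?A *\<^sub>v v = (complex_of_real rp * k) \<cdot>\<^sub>v v"
    proof (rule eq_vecI)
      fix r assume "r < dim_vec ((complex_of_real rp * k) \<cdot>\<^sub>v v)"
      then have r: "r < 3" using v by simp
      have "(?A *\<^sub>v v) $ r = (\<Sum>s<3. complex_of_real (q ^ ?n * Bw d \<sigma> r s) * v $ s)"
        unfolding Mw_eq using mat3_mult_vec[OF v(1) r] .
      also have "\<dots> = complex_of_real rp * (\<Sum>s<3. complex_of_real (t * Bw d \<sigma> r s) * v $ s)"
        using rp by (simp add: t_def sum_distrib_left)
      also have "(\<Sum>s<3. complex_of_real (t * Bw d \<sigma> r s) * v $ s) = (C *\<^sub>v v) $ r"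
        unfolding C_def by (rule mat3_mult_vec[OF v(1) r, symmetric])
      also have "\<dots> = k * v $ r" using v r by simp
      finally show "(?A *\<^sub>v v) $ r = ((complex_of_real rp * k) \<cdot>\<^sub>v v) $ r" using r v by simp
    qed (use v A in simp)
    then have "eigenvector ?A v (complex_of_real rp * k)" using v A unfolding eigenvector_def by simp
    from eigval_le_rho[OF A this] have "rp * cmod k \<le> spectral_radius ?A"
      using rp by (simp add: norm_mult)
    with rp have "rp * cmod k < rp * 1" by linarith
    then show ?thesis using rp rk by (simp only: mult_less_cancel_left_pos)
  qed
  from spectral_radius_jnf_norm_bound_less_1_upper_triangular[OF C this]
  obtain K where K: "\<And>k. norm_bound (C ^\<^sub>m k) K" by auto
  obtain k where k: "K < t ^ k" using real_arch_pow[OF t1] by auto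
  obtain g where g: "C ^\<^sub>m k = mat 3 3 (\<lambda>(r, s). complex_of_real (g r s))"
    "\<forall>r s. 0 \<le> g r s" "t ^ k \<le> g 1 1"
    using mat3_pow[of "\<lambda>r s. t * Bw d \<sigma> r s" t k] Bw_nonneg Bw_diag[OF \<sigma>] t1 unfolding C_def
    by auto
  have "norm ((C ^\<^sub>m k) $$ (1, 1)) \<le> K" using K[of k] g(1) unfolding norm_bound_def by auto
  then have "g 1 1 \<le> K" using g by simp
  with g(3) k show False by simp
qed

definition wv :: "nat \<Rightarrow> real" where
  "wv r = (if r = 0 then 1 else if r = 1 then zeta else 1 / zeta)"

lemma key_eig: "l' < 3 \<Longrightarrow> (\<Sum>l<3. EE d d l' l * (\<Sum>s<3. EE d 0 l s * wv s)) = zeta ^ 2 * wv l'"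
proof -
  assume "l' < 3"
  then have "l' = 0 \<or> l' = 1 \<or> l' = 2" by arith
  moreover have "zeta \<noteq> 0" using zeta_bounds by simp
  ultimately show ?thesis using d3 zeta_sq
    by (auto simp: sum3 EE_def wv_def power2_eq_square field_simps)
qed

lemma word_eig: "r < 3 \<Longrightarrow> (\<Sum>s<3. Bw d (concat (replicate n [0, d])) r s * wv s) = zeta ^ (2 * n) * wv r"
proof (induction n arbitrary: r)
  case 0
  then show ?case by (simp add: sum3) (auto dest!: less3)
next
  case (Suc n)
  let ?s = "concat (replicate n [0, d])"
  have "(\<Sum>s<3. Bw d (concat (replicate (Suc n) [0, d])) r s * wv s)
     = (\<Sum>s<3. (\<Sum>l<3. (\<Sum>l'<3. Bw d ?s r l' * EE d d l' l) * EE d 0 l s) * wv s)" by simp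
  also have "\<dots> = (\<Sum>l'<3. Bw d ?s r l' * (\<Sum>l<3. EE d d l' l * (\<Sum>s<3. EE d 0 l s * wv s)))"
    by (simp add: sum3 algebra_simps)
  also have "\<dots> = (\<Sum>l'<3. Bw d ?s r l' * (zeta ^ 2 * wv l'))"
    by (intro sum.cong refl) (simp add: key_eig)
  also have "\<dots> = zeta ^ 2 * (\<Sum>l'<3. Bw d ?s r l' * wv l')"
    by (simp add: sum_distrib_left algebra_simps)
  also have "\<dots> = zeta ^ 2 * (zeta ^ (2 * n) * wv r)" by (subst Suc.IH[OF Suc.prems]) (rule refl)
  also have "\<dots> = zeta ^ (2 + 2 * n) * wv r" by (simp only: power_add mult.assoc)
  also have "2 + 2 * n = 2 * Suc n" by simp
  finally show ?case .
qed

lemma rho_word: "(zeta * q) ^ (2 * n) \<le> spectral_radius (Mw d d p (concat (replicate n [0, d])))"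
proof -
  let ?s = "concat (replicate n [0, d])"
  let ?A = "Mw d d p ?s"
  have A: "?A \<in> carrier_mat 3 3" by (rule Mw_carrier)
  have len: "length ?s = 2 * n" by (induction n) auto
  define v where "v = vec 3 (\<lambda>r. complex_of_real (wv r))"
  have v: "v \<in> carrier_vec 3" unfolding v_def by simp
  have v0: "v \<noteq> 0\<^sub>v 3"
  proof
    assume "v = 0\<^sub>v 3"
    then have "v $ 0 = 0" by simp
    then show False unfolding v_def wv_def by simp
  qed
  have "?A *\<^sub>v v = complex_of_real ((zeta * q) ^ (2 * n)) \<cdot>\<^sub>v v"
  proof (rule eq_vecI)
    fix r assume "r < dim_vec (complex_of_real ((zeta * q) ^ (2 * n)) \<cdot>\<^sub>v v)"
    then have r: "r < 3" using v by simp
    have "(?A *\<^sub>v v) $ r = (\<Sum>s<3. complex_of_real (q ^ (2 * n) * Bw d ?s r s) * v $ s)"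
      unfolding Mw_eq len by (rule mat3_mult_vec[OF v r])
    also have "\<dots> = (\<Sum>s<3. complex_of_real (q ^ (2 * n) * Bw d ?s r s) * complex_of_real (wv s))"
      by (intro sum.cong) (auto simp: v_def)
    also have "\<dots> = complex_of_real (q ^ (2 * n) * (\<Sum>s<3. Bw d ?s r s * wv s))"
      by (simp add: sum_distrib_left mult.assoc)
    also have "\<dots> = complex_of_real ((zeta * q) ^ (2 * n) * wv r)"
      using word_eig[OF r] by (simp add: power_mult_distrib)
    finally show "(?A *\<^sub>v v) $ r = (complex_of_real ((zeta * q) ^ (2 * n)) \<cdot>\<^sub>v v) $ r"
      using r by (simp add: v_def)
  qed (use v A in simp)
  then have "eigenvector ?A v (complex_of_real ((zeta * q) ^ (2 * n)))"
    using v v0 A unfolding eigenvector_def by simp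
  from eigval_le_rho[OF A this] have "cmod (complex_of_real ((zeta * q) ^ (2 * n))) \<le> spectral_radius ?A" .
  then show ?thesis using q_pos zeta_bounds by (simp only: norm_of_real)
qed

end


context ctx begin

definition SS :: "nat \<Rightarrow> real set" where
  "SS k = {spectral_radius (Mw d d p \<sigma>) | \<sigma>. length \<sigma> = k \<and> set \<sigma> \<subseteq> {0..d}}"

lemma SS_finite: "finite (SS k)"
proof -
  have "SS k = (\<lambda>\<sigma>. spectral_radius (Mw d d p \<sigma>)) ` {\<sigma>. set \<sigma> \<subseteq> {0..d} \<and> length \<sigma> = k}"
    unfolding SS_def by auto
  moreover have "finite {\<sigma>. set \<sigma> \<subseteq> {0..d} \<and> length \<sigma> = k}"
    by (rule finite_lists_length_eq) simp
  ultimately show ?thesis by simp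
qed

lemma SS_ne: "spectral_radius (Mw d d p (replicate k 0)) \<in> SS k"
  unfolding SS_def by force

lemma SS_le: "Sup (SS k) \<le> 3 * (zeta * q) ^ k"
proof (rule cSup_least)
  show "SS k \<noteq> {}" using SS_ne[of k] by auto
next
  fix x assume "x \<in> SS k"
  then obtain \<sigma> where "length \<sigma> = k" "set \<sigma> \<subseteq> {0..d}" "x = spectral_radius (Mw d d p \<sigma>)"
    unfolding SS_def by auto
  then show "x \<le> 3 * (zeta * q) ^ k" using rho_upper[of \<sigma>] by simp
qed

lemma SS_ge: "x \<in> SS k \<Longrightarrow> x \<le> Sup (SS k)"
  using SS_finite by (intro cSup_upper) (auto intro: bdd_above_finite)

lemma SS_pos: "0 \<le> Sup (SS k)"
proof -
  have "q ^ k \<le> spectral_radius (Mw d d p (replicate k 0))"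
    by (rule rho_lower[of "replicate k 0", simplified]) (auto simp: set_replicate_conv_if)
  then show ?thesis using SS_ge[OF SS_ne[of k]] q_pos
    by (meson order.trans zero_le_power less_imp_le)
qed

lemma rho_tilde_eq: "rho_tilde d d p = zeta * q"
proof -
  let ?u = "\<lambda>k. ereal (root k (Sup (SS k)))"
  have rt: "rho_tilde d d p = real_of_ereal (limsup ?u)"
    unfolding rho_tilde_def SS_def ..
  have zq: "0 < zeta * q" using zeta_bounds q_pos by simp
  have up: "limsup ?u \<le> ereal (zeta * q)"
  proof -
    have "limsup ?u \<le> limsup (\<lambda>k. ereal (root k 3 * (zeta * q)))"
    proof (rule Limsup_mono)
      show "\<forall>\<^sub>F k in sequentially. ?u k \<le> ereal (root k 3 * (zeta * q))"
      proof (rule eventually_sequentiallyI[of 1])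
        fix k :: nat assume k: "1 \<le> k"
        have "root k (Sup (SS k)) \<le> root k (3 * (zeta * q) ^ k)"
          using k SS_le by (simp add: real_root_le_iff)
        also have "\<dots> = root k 3 * (zeta * q)"
          using k zq real_root_power_cancel[of k "zeta * q"] real_root_mult[of k 3 "(zeta * q) ^ k"] by simp
        finally show "?u k \<le> ereal (root k 3 * (zeta * q))" by simp
      qed
    qed
    also have "\<dots> = ereal (zeta * q)"
    proof (rule lim_imp_Limsup)
      show "((\<lambda>k. ereal (root k 3 * (zeta * q))) \<longlongrightarrow> ereal (zeta * q)) sequentially"
        unfolding lim_ereal using tendsto_mult[OF LIMSEQ_root_const[of 3] tendsto_const[of "zeta * q"]]
        by simp
    qed simp
    finally show ?thesis .
  qed
  have lo: "ereal (zeta * q) \<le> limsup ?u"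
  proof -
    let ?r = "\<lambda>n::nat. 2 * n + 2"
    have sm: "strict_mono ?r" by (rule strict_monoI) simp
    have "ereal (zeta * q) \<le> limsup (?u \<circ> ?r)"
    proof (rule le_Limsup)
      show "\<forall>\<^sub>F n in sequentially. ereal (zeta * q) \<le> (?u \<circ> ?r) n"
      proof (rule always_eventually, rule allI)
        fix n :: nat
        have "(zeta * q) ^ (2 * Suc n) \<le> spectral_radius (Mw d d p (concat (replicate (Suc n) [0, d])))"
          by (rule rho_word)
        also have "\<dots> \<le> Sup (SS (2 * n + 2))"
        proof (rule SS_ge)
          have "length (concat (replicate (Suc n) [0, d])) = 2 * n + 2" by (induction n) auto
          moreover have "set (concat (replicate (Suc n) [0, d])) \<subseteq> {0..d}" by auto
          ultimately show "spectral_radius (Mw d d p (concat (replicate (Suc n) [0, d]))) \<in> SS (2 * n + 2)"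
            unfolding SS_def by blast
        qed
        finally have h: "root (2 * n + 2) ((zeta * q) ^ (2 * n + 2)) \<le> root (2 * n + 2) (Sup (SS (2 * n + 2)))"
          by (simp add: real_root_le_iff)
        have e: "root (2 * n + 2) ((zeta * q) ^ (2 * n + 2)) = zeta * q"
          by (rule real_root_power_cancel) (use zq in auto)
        have "zeta * q \<le> root (2 * n + 2) (Sup (SS (2 * n + 2)))"
          by (rule order.trans[OF eq_refl[OF e[symmetric]] h])
        then show "ereal (zeta * q) \<le> (?u \<circ> ?r) n" by simp
      qed
    qed simp
    also have "\<dots> \<le> limsup ?u" by (rule limsup_subseq_mono[OF sm])
    finally show ?thesis .
  qed
  from up lo have "limsup ?u = ereal (zeta * q)" by (rule antisym)
  then show ?thesis unfolding rt by simp
qed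

lemma alpha_star_eq: "alpha_star d d p = ln (real d + 1) / ln (real d)"
proof -
  let ?T = "{root (length \<sigma>) (spectral_radius (Mw d d p \<sigma>)) | \<sigma>.
       \<sigma> \<noteq> [] \<and> set \<sigma> \<subseteq> {0..d} \<and> hd \<sigma> \<notin> {0, d}}"
  have "Inf ?T = q"
  proof (rule cInf_eq_minimum)
    have "spectral_radius (Mw d d p [1]) = q"
      using rho_one rho_lower[of "[1]"] d3 by simp
    moreover have "[1::nat] \<noteq> [] \<and> set [1::nat] \<subseteq> {0..d} \<and> hd [1::nat] \<notin> {0, d}" using d3 by simp
    ultimately have "root (length [1::nat]) (spectral_radius (Mw d d p [1])) \<in> ?T" by blast
    then show "q \<in> ?T" using \<open>spectral_radius (Mw d d p [1]) = q\<close> by simp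
  next
    fix y assume "y \<in> ?T"
    then obtain \<sigma> where \<sigma>: "\<sigma> \<noteq> []" "set \<sigma> \<subseteq> {0..d}" and y: "y = root (length \<sigma>) (spectral_radius (Mw d d p \<sigma>))"
      by auto
    have n: "0 < length \<sigma>" using \<sigma> by simp
    have "root (length \<sigma>) (q ^ length \<sigma>) \<le> y"
      unfolding y using rho_lower[OF \<sigma>(2)] n by (simp add: real_root_le_iff)
    then show "q \<le> y" using n q_pos real_root_power_cancel[OF n, of q] by simp
  qed
  moreover have "ln (1 / (real d + 1)) = - ln (real d + 1)" by (simp add: ln_div)
  ultimately show ?thesis unfolding alpha_star_def q_def by simp
qed

lemma alpha_up_eq: "alpha_up d p = ln (real d + 1) / ln (real d)"
proof -
  have "ln (1 / (real d + 1)) = - ln (real d + 1)" by (simp add: ln_div)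
  then show ?thesis unfolding alpha_up_def pq by simp
qed

lemma alpha_low_eq: "alpha_low d d p = (ln (real d + 1) - ln zeta) / ln (real d)"
proof -
  have "ln (zeta * q) = ln zeta - ln (real d + 1)"
    using zeta_bounds unfolding q_def by (simp add: ln_div)
  then show ?thesis unfolding alpha_low_def rho_tilde_eq by simp
qed

end


definition WW :: "nat \<Rightarrow> nat \<Rightarrow> nat list set" where
  "WW d n = {w. set w \<subseteq> {..d} \<and> length w = n}"

definition vl :: "nat \<Rightarrow> nat list \<Rightarrow> int" where
  "vl d w = foldl (\<lambda>a i. int d * a + int i) 0 w"

definition TT :: "nat \<Rightarrow> nat \<Rightarrow> int \<Rightarrow> real set \<Rightarrow> real set" where
  "TT d n v A = (\<lambda>x. real d ^ n * x - real_of_int v) ` A"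

definition NN :: "nat \<Rightarrow> nat \<Rightarrow> int \<Rightarrow> nat" where
  "NN d n s = card {w \<in> WW d n. vl d w = s}"

lemma vl_snoc[simp]: "vl d (w @ [i]) = int d * vl d w + int i"
  by (simp add: vl_def)

lemma vl_Nil[simp]: "vl d [] = 0" by (simp add: vl_def)

lemma WW_finite: "finite (WW d n)"
  unfolding WW_def by (rule finite_lists_length_eq) simp

lemma WW_0: "WW d 0 = {[]}" by (auto simp: WW_def)

lemma WW_Suc: "WW d (Suc n) = (\<lambda>(w, i). w @ [i]) ` (WW d n \<times> {..d})"
proof
  show "WW d (Suc n) \<subseteq> (\<lambda>(w, i). w @ [i]) ` (WW d n \<times> {..d})"
  proof
    fix w' assume "w' \<in> WW d (Suc n)"
    then have w': "set w' \<subseteq> {..d}" "length w' = Suc n" by (auto simp: WW_def)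
    then have "w' \<noteq> []" by auto
    then have "w' = butlast w' @ [last w']" by simp
    moreover have "butlast w' \<in> WW d n" using w' by (auto simp: WW_def dest: in_set_butlastD)
    moreover have "last w' \<in> {..d}" using w' \<open>w' \<noteq> []\<close> by (meson last_in_set subsetD)
    ultimately show "w' \<in> (\<lambda>(w, i). w @ [i]) ` (WW d n \<times> {..d})" by force
  qed
qed (auto simp: WW_def)

lemma WW_Suc_inj: "inj_on (\<lambda>(w, i). w @ [i]) (WW d n \<times> {..d})"
  by (auto simp: inj_on_def)

lemma sum_WW_Suc: "(\<Sum>w\<in>WW d (Suc n). f w) = (\<Sum>w\<in>WW d n. \<Sum>i\<le>d. f (w @ [i]))"
  unfolding WW_Suc sum.reindex[OF WW_Suc_inj] by (simp add: sum.cartesian_product comp_def prod.case_distrib)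

lemma vl_nonneg: "0 \<le> vl d w"
  by (induction w rule: rev_induct) auto

lemma vl_upper: "d \<ge> 3 \<Longrightarrow> w \<in> WW d n \<Longrightarrow> 2 * vl d w \<le> 3 * int d ^ n - 3"
proof (induction n arbitrary: w)
  case 0 then show ?case by (simp add: WW_0)
next
  case (Suc n)
  then obtain w0 i where w: "w = w0 @ [i]" "w0 \<in> WW d n" "i \<le> d" unfolding WW_Suc by auto
  have IH: "2 * vl d w0 \<le> 3 * int d ^ n - 3" using Suc w by auto
  have "2 * vl d w = int d * (2 * vl d w0) + 2 * int i" using w by (simp add: algebra_simps)
  also have "\<dots> \<le> int d * (3 * int d ^ n - 3) + 2 * int d"
    using IH w(3) by (intro add_mono mult_left_mono) auto
  also have "\<dots> \<le> 3 * int d ^ Suc n - 3" using Suc.prems(1) by (simp add: algebra_simps)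
  finally show ?case .
qed

lemma TT_Suc: "(\<lambda>x. real d * x - real i) ` TT d n v A = TT d (Suc n) (int d * v + int i) A"
  unfolding TT_def image_image by (intro image_cong refl) (simp add: algebra_simps)

lemma TT_borel: "d > 0 \<Longrightarrow> A \<in> sets borel \<Longrightarrow> TT d n v A \<in> sets borel"
proof -
  assume d: "d > 0" and A: "A \<in> sets borel"
  have "TT d n v A = (\<lambda>y. (y + real_of_int v) / real d ^ n) -` A"
  proof
    show "TT d n v A \<subseteq> (\<lambda>y. (y + real_of_int v) / real d ^ n) -` A"
      unfolding TT_def using d by auto
    show "(\<lambda>y. (y + real_of_int v) / real d ^ n) -` A \<subseteq> TT d n v A"
    proof
      fix y assume "y \<in> (\<lambda>y. (y + real_of_int v) / real d ^ n) -` A"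
      moreover have "y = real d ^ n * ((y + real_of_int v) / real d ^ n) - real_of_int v" using d by simp
      ultimately show "y \<in> TT d n v A" unfolding TT_def by blast
    qed
  qed
  moreover have "(\<lambda>y. (y + real_of_int v) / real d ^ n) \<in> borel_measurable borel" by measurable
  ultimately show ?thesis using A by (metis measurable_sets_borel)
qed



locale ctx2 = ctx +
  fixes \<mu> :: "real measure"
  assumes ssm: "is_ssm d d p \<mu>"
begin

lemma ps: "prob_space \<mu>" and sets_mu: "sets \<mu> = sets borel"
  and cpt: "\<exists>K. compact K \<and> emeasure \<mu> (UNIV - K) = 0"
  and seq: "\<And>A. A \<in> sets borel \<Longrightarrow> measure \<mu> A = (\<Sum>i\<le>d. p i * measure \<mu> ((\<lambda>x. real d * x - real i) ` A))"
  using ssm unfolding is_ssm_def by auto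

lemma space_mu: "space \<mu> = UNIV"
  using sets_mu by (metis sets_eq_imp_space_eq space_borel)

lemma d_pos: "d > 0" using d3 by simp

lemma iter: "A \<in> sets borel \<Longrightarrow> measure \<mu> A = (\<Sum>w\<in>WW d n. q ^ n * measure \<mu> (TT d n (vl d w) A))"
proof (induction n)
  case 0
  have "TT d 0 0 A = A" unfolding TT_def by simp
  then show ?case by (simp add: WW_0)
next
  case (Suc n)
  have "measure \<mu> A = (\<Sum>w\<in>WW d n. q ^ n * measure \<mu> (TT d n (vl d w) A))" by (rule Suc.IH[OF Suc.prems])
  also have "\<dots> = (\<Sum>w\<in>WW d n. q ^ n * (\<Sum>i\<le>d. q * measure \<mu> (TT d (Suc n) (vl d (w @ [i])) A)))"
  proof (rule sum.cong[OF refl])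
    fix w assume "w \<in> WW d n"
    have "measure \<mu> (TT d n (vl d w) A) = (\<Sum>i\<le>d. p i * measure \<mu> ((\<lambda>x. real d * x - real i) ` TT d n (vl d w) A))"
      by (rule seq[OF TT_borel[OF d_pos Suc.prems]])
    also have "\<dots> = (\<Sum>i\<le>d. q * measure \<mu> (TT d (Suc n) (vl d (w @ [i])) A))"
      unfolding TT_Suc vl_snoc pq q_def ..
    finally show "q ^ n * measure \<mu> (TT d n (vl d w) A) = q ^ n * (\<Sum>i\<le>d. q * measure \<mu> (TT d (Suc n) (vl d (w @ [i])) A))"
      by simp
  qed
  also have "\<dots> = (\<Sum>w\<in>WW d (Suc n). q ^ Suc n * measure \<mu> (TT d (Suc n) (vl d w) A))"
    unfolding sum_WW_Suc by (simp add: sum_distrib_left mult.assoc mult.left_commute)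
  finally show ?case .
qed

lemma borel_mu: "A \<in> sets borel \<Longrightarrow> A \<in> sets \<mu>" using sets_mu by simp

lemma support_null: "UNIV - {0..3/2} \<in> null_sets \<mu>"
proof -
  obtain K where K: "compact K" "emeasure \<mu> (UNIV - K) = 0" using cpt by auto
  have Kb: "UNIV - K \<in> sets borel" using K(1) by (simp add: compact_imp_closed borel_closed sets.compl_sets)
  have Kn: "UNIV - K \<in> null_sets \<mu>" using K(2) Kb borel_mu by auto
  obtain R0 where R0: "\<And>x. x \<in> K \<Longrightarrow> norm x \<le> R0"
    using compact_imp_bounded[OF K(1)] unfolding bounded_iff by blast
  define R where "R = \<bar>R0\<bar> + 1"
  have R: "\<And>x. x \<in> K \<Longrightarrow> \<bar>x\<bar> \<le> R" "0 < R" using R0 unfolding R_def by force+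
  define Ad where "Ad = (\<lambda>k::nat. {x::real. x < - (1 / (real k + 1))} \<union> {x. x > 3/2 + 1 / (real k + 1)})"
  have Adb: "Ad k \<in> sets borel" for k unfolding Ad_def by measurable
  have "Ad k \<in> null_sets \<mu>" for k
  proof -
    define \<delta> where "\<delta> = 1 / (real k + 1)"
    have \<delta>: "0 < \<delta>" unfolding \<delta>_def by simp
    obtain n where n: "R / \<delta> < real d ^ n" using real_arch_pow[of "real d" "R / \<delta>"] d3 by auto
    have dn: "R < \<delta> * real d ^ n" using n \<delta> by (simp add: field_simps)
    have "measure \<mu> (TT d n (vl d w) (Ad k)) = 0" if w: "w \<in> WW d n" for w
    proof -
      have v0: "0 \<le> real_of_int (vl d w)" using vl_nonneg by simp
      have v1: "2 * real_of_int (vl d w) \<le> 3 * real d ^ n"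
      proof -
        have "real_of_int (2 * vl d w) \<le> real_of_int (3 * int d ^ n - 3)"
          using vl_upper[OF d3 w] by (simp only: of_int_le_iff)
        then show ?thesis by simp
      qed
      have "TT d n (vl d w) (Ad k) \<subseteq> UNIV - K"
      proof
        fix y assume "y \<in> TT d n (vl d w) (Ad k)"
        then obtain x where x: "x \<in> Ad k" "y = real d ^ n * x - real_of_int (vl d w)"
          unfolding TT_def by auto
        have "R < \<bar>y\<bar>"
        proof (cases "x < - \<delta>")
          case True
          then have "real d ^ n * x \<le> real d ^ n * (- \<delta>)" by (intro mult_left_mono) auto
          then have "real d ^ n * x \<le> - (\<delta> * real d ^ n)" by (simp add: mult.commute)
          then have "y < - R" using x(2) v0 dn by linarith
          then show ?thesis by linarith
        next
          case False
          then have "x > 3/2 + \<delta>" using x(1) unfolding Ad_def \<delta>_def by auto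
          then have "real d ^ n * (3/2 + \<delta>) \<le> real d ^ n * x" by (intro mult_left_mono) auto
          then have "3/2 * real d ^ n + \<delta> * real d ^ n \<le> real d ^ n * x" by (simp add: algebra_simps)
          then have "y > R" using x(2) v1 dn by linarith
          then show ?thesis by linarith
        qed
        then show "y \<in> UNIV - K" using R(1) by force
      qed
      then have "TT d n (vl d w) (Ad k) \<in> null_sets \<mu>"
        using Kn by (rule null_sets_subset[rotated 2]) (use TT_borel[OF d_pos Adb] borel_mu in auto)
      then show ?thesis by (rule measure_eq_0_null_sets)
    qed
    then have "measure \<mu> (Ad k) = 0" using iter[OF Adb[of k], of n] by simp
    moreover have "emeasure \<mu> (Ad k) = ennreal (measure \<mu> (Ad k))"
      using finite_measure.emeasure_eq_measure[OF prob_space.finite_measure[OF ps]] by blast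
    ultimately show ?thesis using Adb borel_mu by auto
  qed
  then have nU: "(\<Union>k. Ad k) \<in> null_sets \<mu>" by blast
  have sU: "UNIV - {0..3/2::real} \<in> sets \<mu>" using borel_mu by simp
  have "UNIV - {0..3/2} \<subseteq> (\<Union>k. Ad k)"
  proof
    fix x :: real assume "x \<in> UNIV - {0..3/2}"
    then have "x < 0 \<or> x > 3/2" by auto
    then obtain e where e: "0 < e" "x < - e \<or> x > 3/2 + e"
    proof
      assume x: "x < 0"
      have "0 < - x / 2" using x by (simp add: field_simps)
      moreover have "x < - (- x / 2)" using x by (simp add: field_simps)
      ultimately show ?thesis using that by blast
    next
      assume x: "x > 3/2"
      have "0 < (x - 3/2) / 2" using x by (simp add: field_simps)
      moreover have "3/2 + (x - 3/2) / 2 < x" using x by (simp add: field_simps)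
      ultimately show ?thesis using that by blast
    qed
    obtain k :: nat where k: "1 / (real k + 1) < e"
    proof -
      obtain k where "inverse (real (Suc k)) < e" using reals_Archimedean[OF e(1)] by blast
      then show ?thesis using that[of k] by (simp add: field_simps)
    qed
    have "x < - (1 / (real k + 1)) \<or> 3/2 + 1 / (real k + 1) < x" using e k by linarith
    then show "x \<in> (\<Union>k. Ad k)" unfolding Ad_def by blast
  qed
  then show ?thesis by (rule null_sets_subset[OF nU sU])
qed

lemma meas_zero: "B \<in> sets borel \<Longrightarrow> B \<inter> {0..3/2} = {} \<Longrightarrow> measure \<mu> B = 0"
  by (rule measure_eq_0_null_sets, rule null_sets_subset[OF support_null]) (auto simp: borel_mu)

lemma meas_one: "B \<in> sets borel \<Longrightarrow> {0..3/2} \<subseteq> B \<Longrightarrow> measure \<mu> B = 1"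
proof -
  assume B: "B \<in> sets borel" "{0..3/2} \<subseteq> B"
  have "measure \<mu> (UNIV - B) = 0" using B by (intro meas_zero) auto
  moreover have "measure \<mu> (UNIV - B) = 1 - measure \<mu> B"
    using prob_space.prob_compl[OF ps, of B] B borel_mu space_mu by simp
  ultimately show ?thesis by simp
qed

lemma meas_le1: "measure \<mu> B \<le> 1"
  using prob_space.prob_le_1[OF ps] .

lemma card_S: "finite S \<Longrightarrow> card {w \<in> WW d n. vl d w \<in> S} = (\<Sum>s\<in>S. NN d n s)"
proof -
  assume S: "finite S"
  have "{w \<in> WW d n. vl d w \<in> S} = (\<Union>s\<in>S. {w \<in> WW d n. vl d w = s})" by auto
  then have "card {w \<in> WW d n. vl d w \<in> S} = card (\<Union>s\<in>S. {w \<in> WW d n. vl d w = s})" by simp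
  also have "\<dots> = (\<Sum>s\<in>S. card {w \<in> WW d n. vl d w = s})"
    by (rule card_UN_disjoint) (use S WW_finite in auto)
  finally show ?thesis unfolding NN_def .
qed

lemma upper_bound:
  assumes A: "A \<in> sets borel" and S: "finite S"
    and out: "\<And>w. w \<in> WW d n \<Longrightarrow> vl d w \<notin> S \<Longrightarrow> TT d n (vl d w) A \<inter> {0..3/2} = {}"
  shows "measure \<mu> A \<le> q ^ n * (\<Sum>s\<in>S. real (NN d n s))"
proof -
  have "measure \<mu> A = (\<Sum>w\<in>WW d n. q ^ n * measure \<mu> (TT d n (vl d w) A))" by (rule iter[OF A])
  also have "\<dots> \<le> (\<Sum>w\<in>WW d n. q ^ n * (if vl d w \<in> S then 1 else 0))"
  proof (intro sum_mono mult_left_mono)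
    fix w assume w: "w \<in> WW d n"
    show "measure \<mu> (TT d n (vl d w) A) \<le> (if vl d w \<in> S then 1 else 0)"
      using meas_le1 meas_zero[OF TT_borel[OF d_pos A] out[OF w]] by auto
  qed (use q_pos in auto)
  also have "\<dots> = q ^ n * real (card {w \<in> WW d n. vl d w \<in> S})"
    by (simp add: sum_distrib_left[symmetric] sum.If_cases WW_finite Int_def conj_commute)
  also have "\<dots> = q ^ n * (\<Sum>s\<in>S. real (NN d n s))" by (simp add: card_S[OF S])
  finally show ?thesis .
qed

lemma lower_bound:
  assumes A: "A \<in> sets borel" and S: "finite S"
    and inn: "\<And>s. s \<in> S \<Longrightarrow> {0..3/2} \<subseteq> TT d n s A"
  shows "q ^ n * (\<Sum>s\<in>S. real (NN d n s)) \<le> measure \<mu> A"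
proof -
  have "q ^ n * (\<Sum>s\<in>S. real (NN d n s)) = q ^ n * real (card {w \<in> WW d n. vl d w \<in> S})"
    by (simp add: card_S[OF S])
  also have "\<dots> = (\<Sum>w\<in>WW d n. q ^ n * (if vl d w \<in> S then 1 else 0))"
    by (simp add: sum_distrib_left[symmetric] sum.If_cases WW_finite Int_def conj_commute)
  also have "\<dots> \<le> (\<Sum>w\<in>WW d n. q ^ n * measure \<mu> (TT d n (vl d w) A))"
  proof (intro sum_mono mult_left_mono)
    fix w assume w: "w \<in> WW d n"
    show "(if vl d w \<in> S then 1 else 0) \<le> measure \<mu> (TT d n (vl d w) A)"
      using meas_one[OF TT_borel[OF d_pos A] inn] by auto
  qed (use q_pos in auto)
  also have "\<dots> = measure \<mu> A" by (rule iter[OF A, symmetric])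
  finally show ?thesis .
qed

end


lemma digit_cases:
  fixes d :: int and k i r :: int
  assumes d: "d \<ge> 2" and eq: "d * k + i = r" and i: "0 \<le> i" "i \<le> d" and r: "0 \<le> r" "r < d"
  shows "(k = 0 \<and> i = r) \<or> (k = -1 \<and> i = d \<and> r = 0)"
proof -
  have "k \<ge> 1 \<or> k = 0 \<or> k = -1 \<or> k \<le> -2" by linarith
  moreover have "\<not> k \<ge> 1"
  proof
    assume "k \<ge> 1" then have "d * k \<ge> d * 1" using d by (intro mult_left_mono) auto
    then show False using eq i r by linarith
  qed
  moreover have "\<not> k \<le> -2"
  proof
    assume "k \<le> -2" then have "d * k \<le> d * (-2)" using d by (intro mult_left_mono) auto
    then show False using eq i r d by linarith
  qed
  ultimately show ?thesis using eq i r by auto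
qed

context ctx begin

lemma NN_0: "NN d 0 s = (if s = 0 then 1 else 0)"
proof -
  have "{w \<in> {[]}. vl d w = s} = (if s = 0 then {[]} else {})" by auto
  then show ?thesis unfolding NN_def WW_0 by simp
qed

lemma NN_rec:
  assumes r: "0 \<le> r" "r < int d"
  shows "NN d (Suc n) (int d * s + r) = (if r = 0 then NN d n s + NN d n (s - 1) else NN d n s)"
proof -
  let ?t = "int d * s + r"
  let ?A = "(\<lambda>w. w @ [nat r]) ` {w \<in> WW d n. vl d w = s}"
  let ?B = "(\<lambda>w. w @ [d]) ` {w \<in> WW d n. vl d w = s - 1}"
  have set_eq: "{w \<in> WW d (Suc n). vl d w = ?t} = ?A \<union> (if r = 0 then ?B else {})"
  proof
    show "{w \<in> WW d (Suc n). vl d w = ?t} \<subseteq> ?A \<union> (if r = 0 then ?B else {})"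
    proof
      fix w' assume "w' \<in> {w \<in> WW d (Suc n). vl d w = ?t}"
      then obtain w i where w: "w' = w @ [i]" "w \<in> WW d n" "i \<le> d" "int d * vl d w + int i = ?t"
        unfolding WW_Suc by auto
      have "int d * (vl d w - s) + int i = r" using w(4) by (simp add: algebra_simps)
      from digit_cases[OF _ this _ _ r] d3 w(3)
      have "(vl d w - s = 0 \<and> int i = r) \<or> (vl d w - s = -1 \<and> int i = int d \<and> r = 0)" by auto
      then show "w' \<in> ?A \<union> (if r = 0 then ?B else {})"
      proof
        assume "vl d w - s = 0 \<and> int i = r"
        then have "vl d w = s" "i = nat r" by auto
        then show ?thesis using w by auto
      next
        assume "vl d w - s = -1 \<and> int i = int d \<and> r = 0"
        then have "vl d w = s - 1" "i = d" "r = 0" by auto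
        then show ?thesis using w by auto
      qed
    qed
  next
    show "?A \<union> (if r = 0 then ?B else {}) \<subseteq> {w \<in> WW d (Suc n). vl d w = ?t}"
      using r by (auto simp: WW_def algebra_simps)
  qed
  have cA: "card ?A = NN d n s" unfolding NN_def by (rule card_image) (auto simp: inj_on_def)
  have cB: "card ?B = NN d n (s - 1)" unfolding NN_def by (rule card_image) (auto simp: inj_on_def)
  have fin: "finite ?A" "finite ?B" using WW_finite by auto
  have disj: "?A \<inter> ?B = {}" using r by auto
  show ?thesis
  proof (cases "r = 0")
    case True
    then have "NN d (Suc n) ?t = card (?A \<union> ?B)" unfolding NN_def set_eq by simp
    also have "\<dots> = card ?A + card ?B" by (rule card_Un_disjoint[OF fin disj])
    finally show ?thesis using cA cB True by simp
  next
    case False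
    then have "NN d (Suc n) ?t = card ?A" unfolding NN_def set_eq by simp
    then show ?thesis using cA False by simp
  qed
qed

lemma NN_fib: "NN d n s \<le> fb (Suc n) \<and> NN d n (s - 1) + NN d n s \<le> fb (Suc (Suc n))"
proof (induction n arbitrary: s)
  case 0 then show ?case by (simp add: NN_0)
next
  case (Suc n)
  define k where "k = s div int d"
  define r where "r = s mod int d"
  have dpos: "int d > 0" using d3 by simp
  have s: "s = int d * k + r" unfolding k_def r_def by simp
  have r: "0 \<le> r" "r < int d" unfolding r_def using dpos by auto
  have f3: "fb (Suc (Suc (Suc n))) = fb (Suc n) + fb (Suc (Suc n))" by simp
  have fm: "fb (Suc n) \<le> fb (Suc (Suc n))" by (rule fb_mono_Suc)
  have IH1: "NN d n k \<le> fb (Suc n)" "NN d n (k - 1) + NN d n k \<le> fb (Suc (Suc n))" using Suc.IH[of k] by auto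
  have IH2: "NN d n (k - 1) \<le> fb (Suc n)" using Suc.IH[of "k - 1"] by auto
  consider "r = 0" | "r = 1" | "r \<ge> 2" using r by linarith
  then show ?case
  proof cases
    case 1
    have a: "NN d (Suc n) s = NN d n k + NN d n (k - 1)" using NN_rec[OF r] s 1 by simp
    have e: "s - 1 = int d * (k - 1) + (int d - 1)" using s 1 by (simp add: algebra_simps)
    have h0: "0 \<le> int d - 1" "int d - 1 < int d" and h2: "(int d - 1 = 0) = False" using d3 by auto
    note h = NN_rec[OF h0, of n "k - 1", unfolded h2 if_False]
    have b: "NN d (Suc n) (s - 1) = NN d n (k - 1)" unfolding e by (rule h)
    show ?thesis using a b IH1 IH2 f3 fm by simp
  next
    case 2
    have a: "NN d (Suc n) s = NN d n k" using NN_rec[OF r] s 2 by simp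
    have "s - 1 = int d * k + 0" using s 2 by simp
    then have b: "NN d (Suc n) (s - 1) = NN d n k + NN d n (k - 1)"
      using NN_rec[of 0 n k] dpos by simp
    show ?thesis using a b IH1 IH2 f3 fm by simp
  next
    case 3
    have a: "NN d (Suc n) s = NN d n k" using NN_rec[OF r] s 3 by simp
    have e: "s - 1 = int d * k + (r - 1)" using s by simp
    have h0: "0 \<le> r - 1" "r - 1 < int d" and h2: "(r - 1 = 0) = False" using r 3 by auto
    note h = NN_rec[OF h0, of n k, unfolded h2 if_False]
    have b: "NN d (Suc n) (s - 1) = NN d n k" unfolding e by (rule h)
    show ?thesis using a b IH1 IH2 f3 fm by simp
  qed
qed

fun sp :: "nat \<Rightarrow> int" where
  "sp 0 = 0"
| "sp (Suc m) = int d * sp m + (if even m then 1 else 0)"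

lemma NN_sp: "(even m \<longrightarrow> NN d m (sp m - 1) = fb m \<and> NN d m (sp m) = fb (Suc m)) \<and>
    (odd m \<longrightarrow> NN d m (sp m - 1) = fb (Suc m) \<and> NN d m (sp m) = fb m)"
proof (induction m)
  case 0 then show ?case by (simp add: NN_0)
next
  case (Suc m)
  have dpos: "int d > 0" using d3 by simp
  show ?case
  proof (cases "even m")
    case True
    have a: "NN d (Suc m) (sp (Suc m)) = NN d m (sp m)" using NN_rec[of 1 m "sp m"] True d3 by simp
    have b: "NN d (Suc m) (sp (Suc m) - 1) = NN d m (sp m) + NN d m (sp m - 1)"
      using NN_rec[of 0 m "sp m"] True dpos by simp
    show ?thesis using a b True Suc.IH by simp
  next
    case False
    have a: "NN d (Suc m) (sp (Suc m)) = NN d m (sp m) + NN d m (sp m - 1)"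
      using NN_rec[of 0 m "sp m"] False dpos by simp
    have e: "sp (Suc m) - 1 = int d * (sp m - 1) + (int d - 1)" using False by (simp add: algebra_simps)
    have h0: "0 \<le> int d - 1" "int d - 1 < int d" and h2: "(int d - 1 = 0) = False" using d3 by auto
    note h = NN_rec[OF h0, of m "sp m - 1", unfolded h2 if_False]
    have b: "NN d (Suc m) (sp (Suc m) - 1) = NN d m (sp m - 1)" unfolding e by (rule h)
    show ?thesis using a b False Suc.IH by simp
  qed
qed

lemma NN_sp_sum: "NN d m (sp m - 1) + NN d m (sp m) = fb (Suc (Suc m))"
  using NN_sp[of m] by (cases "even m") auto

definition x0 :: real where "x0 = real d / (real d ^ 2 - 1)"

lemma x0_sp: "real d ^ m * x0 - real_of_int (sp m) = (if even m then real d / (real d ^ 2 - 1) else 1 / (real d ^ 2 - 1))"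
proof (induction m)
  case 0 then show ?case by (simp add: x0_def)
next
  case (Suc m)
  have d2: "real d ^ 2 - 1 > 0" using d3
    by (metis less_numeral_extra(1) diff_gt_0_iff_gt numeral_le_real_of_nat_iff one_less_power order_less_le_trans one_less_numeral_iff semiring_norm(77) zero_less_numeral)
  have "real d ^ Suc m * x0 - real_of_int (sp (Suc m)) = real d * (real d ^ m * x0 - real_of_int (sp m)) - (if even m then 1 else 0)"
    by (simp add: algebra_simps)
  also have "\<dots> = (if even (Suc m) then real d / (real d ^ 2 - 1) else 1 / (real d ^ 2 - 1))"
    unfolding Suc.IH using d2 by (auto simp: field_simps power2_eq_square)
  finally show ?case .
qed

lemma x0_sp_bounds: "0 \<le> real d ^ m * x0 - real_of_int (sp m)" "real d ^ m * x0 - real_of_int (sp m) \<le> 1/2"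
proof -
  have dd: "real d ^ 2 - 1 \<ge> 2 * real d"
  proof -
    have "real d * real d \<ge> 3 * real d" using d3 by (intro mult_right_mono) auto
    moreover have "real d \<ge> 3" using d3 by simp
    ultimately show ?thesis unfolding power2_eq_square by linarith
  qed
  have d2: "real d ^ 2 - 1 > 0" using dd d3 by linarith
  have "real d / (real d ^ 2 - 1) \<le> 1/2" using dd d2 d3 by (simp add: field_simps)
  moreover have "1 / (real d ^ 2 - 1) \<le> 1/2" using dd d2 d3 by (simp add: field_simps)
  ultimately show "0 \<le> real d ^ m * x0 - real_of_int (sp m)" "real d ^ m * x0 - real_of_int (sp m) \<le> 1/2"
    unfolding x0_sp using d2 by auto
qed

end


context ctx2 begin

lemma ball_upper:
  assumes r: "0 < r" and dn: "real d ^ n * r \<le> 1"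
  shows "measure \<mu> (ball x r) \<le> 7 * (zeta * q) ^ n"
proof -
  define z where "z = \<lfloor>real d ^ n * x\<rfloor>"
  have z: "real_of_int z \<le> real d ^ n * x" "real d ^ n * x < real_of_int z + 1"
    unfolding z_def by linarith+
  let ?S = "{z - 3..z + 3}"
  have "measure \<mu> (ball x r) \<le> q ^ n * (\<Sum>s\<in>?S. real (NN d n s))"
  proof (rule upper_bound)
    fix w assume "w \<in> WW d n" "vl d w \<notin> ?S"
    then have v: "vl d w < z - 3 \<or> vl d w > z + 3" by auto
    show "TT d n (vl d w) (ball x r) \<inter> {0..3/2} = {}"
    proof (rule ccontr)
      assume "TT d n (vl d w) (ball x r) \<inter> {0..3/2} \<noteq> {}"
      then obtain y where y: "dist x y < r" "0 \<le> real d ^ n * y - real_of_int (vl d w)"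
        "real d ^ n * y - real_of_int (vl d w) \<le> 3/2"
        unfolding TT_def by auto
      have "\<bar>real d ^ n * y - real d ^ n * x\<bar> = real d ^ n * \<bar>y - x\<bar>"
        unfolding right_diff_distrib[symmetric] abs_mult by simp
      also have "\<dots> \<le> real d ^ n * r" using y(1) by (intro mult_left_mono) (auto simp: dist_real_def)
      finally have c: "\<bar>real d ^ n * y - real d ^ n * x\<bar> \<le> 1" using dn by linarith
      from v show False
      proof
        assume "vl d w < z - 3"
        then have "real_of_int (vl d w) \<le> real_of_int z - 4" by linarith
        then show False using y z c by linarith
      next
        assume "vl d w > z + 3"
        then have "real_of_int (vl d w) \<ge> real_of_int z + 4" by linarith
        then show False using y z c by linarith
      qed
    qed
  qed (simp_all add: d_pos)
  also have "\<dots> \<le> q ^ n * (\<Sum>s\<in>?S. zeta ^ n)"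
    using fb_upper NN_fib q_pos by (intro mult_left_mono sum_mono) (auto intro: order.trans[OF of_nat_mono])
  also have "\<dots> = 7 * (zeta * q) ^ n" by (simp add: power_mult_distrib)
  finally show ?thesis .
qed

lemma ball_lower:
  assumes r: "0 < r" and dm: "3 < real d ^ m * r"
  shows "(zeta * q) ^ m \<le> measure \<mu> (ball x0 r)"
proof -
  let ?S = "{sp m - 1, sp m}"
  have "q ^ m * (\<Sum>s\<in>?S. real (NN d m s)) \<le> measure \<mu> (ball x0 r)"
  proof (rule lower_bound)
    fix s assume s: "s \<in> ?S"
    have c: "0 \<le> real d ^ m * x0 - real_of_int s" "real d ^ m * x0 - real_of_int s \<le> 3/2"
      using s x0_sp_bounds[of m] by auto
    show "{0..3/2} \<subseteq> TT d m s (ball x0 r)"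
    proof
      fix u :: real assume u: "u \<in> {0..3/2}"
      define y where "y = (u + real_of_int s) / real d ^ m"
      have dm0: "real d ^ m > 0" using d_pos by simp
      have uy: "u = real d ^ m * y - real_of_int s" unfolding y_def using dm0 by simp
      have "real d ^ m * x0 - real_of_int s - u = real d ^ m * (x0 - y)"
        unfolding uy by (simp add: algebra_simps)
      moreover have "\<bar>real d ^ m * (x0 - y)\<bar> = real d ^ m * \<bar>x0 - y\<bar>"
        unfolding abs_mult by simp
      ultimately have "real d ^ m * \<bar>x0 - y\<bar> = \<bar>real d ^ m * x0 - real_of_int s - u\<bar>"
        by simp
      also have "\<dots> \<le> 3" using c u by auto
      also have "\<dots> < real d ^ m * r" by (rule dm)
      finally have "\<bar>x0 - y\<bar> < r" using dm0 by simp
      then have "y \<in> ball x0 r" by (simp add: dist_real_def)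
      then show "u \<in> TT d m s (ball x0 r)" unfolding TT_def using uy by blast
    qed
  qed simp_all
  moreover have "(\<Sum>s\<in>?S. real (NN d m s)) = real (fb (Suc (Suc m)))"
  proof -
    have "sp m - 1 \<noteq> sp m" by simp
    then have "(\<Sum>s\<in>?S. real (NN d m s)) = real (NN d m (sp m - 1)) + real (NN d m (sp m))" by simp
    also have "\<dots> = real (NN d m (sp m - 1) + NN d m (sp m))" by (rule of_nat_add[symmetric])
    also have "\<dots> = real (fb (Suc (Suc m)))" unfolding NN_sp_sum ..
    finally show ?thesis .
  qed
  moreover have "q ^ m * zeta ^ m \<le> q ^ m * real (fb (Suc (Suc m)))"
    using fb_lower q_pos by (intro mult_left_mono) auto
  ultimately show ?thesis by (simp add: power_mult_distrib mult.commute)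
qed

lemma scale_index:
  assumes r: "0 < r" "r < 1"
  obtains n where "real d ^ n * r \<le> 1" "1 < real d ^ Suc n * r"
proof -
  define t where "t = - ln r / ln (real d)"
  have ld: "ln (real d) > 0" using d3 by simp
  have "- ln r > 0" using r by simp
  then have t0: "0 \<le> t" unfolding t_def using ld by (intro divide_nonneg_pos) auto
  define n where "n = nat \<lfloor>t\<rfloor>"
  have n: "real n \<le> t" "t < real n + 1" unfolding n_def using t0 by linarith+
  have pw: "real d powr t = 1 / r"
    unfolding t_def powr_def using d3 r ld by (simp add: ln_div exp_minus field_simps)
  have "real d ^ n = real d powr real n" using d3 by (simp add: powr_realpow)
  also have "\<dots> \<le> real d powr t" using n d3 by (intro powr_mono) auto
  finally have n1: "real d ^ n * r \<le> 1" using pw r by (simp add: field_simps)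
  have a: "real d powr t < real d powr (real n + 1)" using n d3 by (intro powr_less_mono) auto
  have b: "real d powr (real n + 1) = real d ^ Suc n"
    using d3 by (simp add: powr_add powr_realpow)
  from a b pw have "1 / r < real d ^ Suc n" by simp
  then have "1 < real d ^ Suc n * r" using r by (simp add: field_simps)
  with n1 show ?thesis using that by blast
qed

end


context ctx2 begin

definition aa0 :: real where "aa0 = - ln (zeta * q)"
definition LL :: real where "LL = aa0 / ln (real d)"

lemma aa0_pos: "0 < aa0"
  unfolding aa0_def using zq_less q_pos zeta_bounds by simp

lemma ld_pos: "0 < ln (real d)" using d3 by simp

lemma zq_pos: "0 < zeta * q" using q_pos zeta_bounds by simp

lemma x0_est:
  assumes r: "0 < r" "r < 1"
  shows "0 < measure \<mu> (ball x0 r)" "\<bar>ln (measure \<mu> (ball x0 r)) - LL * ln r\<bar> \<le> ln 7 + 2 * aa0"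
proof -
  obtain n where n: "real d ^ n * r \<le> 1" "1 < real d ^ Suc n * r" using scale_index[OF r] by blast
  have "3 < real d ^ Suc (Suc n) * r"
  proof -
    have eq: "real d ^ Suc (Suc n) * r = real d * (real d ^ Suc n * r)" by (simp add: mult.assoc)
    have "real d * 1 < real d * (real d ^ Suc n * r)" using n(2) d3 by (intro mult_strict_left_mono) auto
    then show ?thesis using eq d3 by linarith
  qed
  from ball_lower[OF r(1) this] have lo: "(zeta * q) ^ Suc (Suc n) \<le> measure \<mu> (ball x0 r)" .
  have up: "measure \<mu> (ball x0 r) \<le> 7 * (zeta * q) ^ n" by (rule ball_upper[OF r(1) n(1)])
  have pos: "0 < (zeta * q) ^ Suc (Suc n)" using zq_pos by simp
  show mpos: "0 < measure \<mu> (ball x0 r)" using lo pos by linarith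
  have l1: "- (real n + 2) * aa0 \<le> ln (measure \<mu> (ball x0 r))"
  proof -
    have "ln ((zeta * q) ^ Suc (Suc n)) \<le> ln (measure \<mu> (ball x0 r))" using lo pos by simp
    moreover have "ln ((zeta * q) ^ Suc (Suc n)) = - (real n + 2) * aa0"
      unfolding aa0_def ln_realpow by (simp add: algebra_simps)
    ultimately show ?thesis by simp
  qed
  have l2: "ln (measure \<mu> (ball x0 r)) \<le> ln 7 - real n * aa0"
  proof -
    have "ln (measure \<mu> (ball x0 r)) \<le> ln (7 * (zeta * q) ^ n)" using up mpos by simp
    moreover have "ln (7 * (zeta * q) ^ n) = ln 7 - real n * aa0"
    proof -
      have h1: "ln (7 * (zeta * q) ^ n) = ln 7 + ln ((zeta * q) ^ n)" by (subst ln_mult) (use zq_pos in auto)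
      have h2: "ln ((zeta * q) ^ n) = real n * ln (zeta * q)" by (rule ln_realpow)
      show ?thesis unfolding h1 h2 aa0_def by simp
    qed
    ultimately show ?thesis by simp
  qed
  have lr1: "real n * ln (real d) + ln r \<le> 0"
  proof -
    have "ln (real d ^ n * r) \<le> 0" using n(1) r d3 by simp
    then show ?thesis using r d3 by (simp add: ln_mult ln_realpow)
  qed
  have lr2: "0 < (real n + 1) * ln (real d) + ln r"
  proof -
    have "0 < ln (real d ^ Suc n * r)" using n(2) by simp
    then show ?thesis using r d3 by (simp add: ln_mult ln_realpow algebra_simps)
  qed
  have e1: "ln r / ln (real d) \<le> - real n" using lr1 ld_pos by (simp add: field_simps)
  have e2: "- (real n + 1) < ln r / ln (real d)" using lr2 ld_pos by (simp add: field_simps)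
  have LLr: "LL * ln r = aa0 * (ln r / ln (real d))" unfolding LL_def by simp
  have f1: "aa0 * (ln r / ln (real d)) \<le> aa0 * (- real n)" using e1 aa0_pos by (intro mult_left_mono) auto
  have f2: "aa0 * (- (real n + 1)) \<le> aa0 * (ln r / ln (real d))" using e2 aa0_pos by (intro mult_left_mono) auto
  show "\<bar>ln (measure \<mu> (ball x0 r)) - LL * ln r\<bar> \<le> ln 7 + 2 * aa0"
  proof -
    have l7: "0 \<le> ln (7::real)" by simp
    have f1': "aa0 * (ln r / ln (real d)) \<le> - (aa0 * real n)" using f1 by simp
    have f2': "- (aa0 * real n) - aa0 \<le> aa0 * (ln r / ln (real d))" using f2 by (simp add: algebra_simps)
    have l1': "- (aa0 * real n) - 2 * aa0 \<le> ln (measure \<mu> (ball x0 r))" using l1 by (simp add: algebra_simps)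
    have l2': "ln (measure \<mu> (ball x0 r)) \<le> ln 7 - aa0 * real n" using l2 by (simp add: algebra_simps)
    show ?thesis unfolding LLr abs_le_iff using l1' l2' f1' f2' aa0_pos l7 by linarith
  qed
qed

lemma x0_msupp: "x0 \<in> msupp \<mu>"
  unfolding msupp_def
proof (intro CollectI allI impI)
  fix r :: real assume r: "0 < r"
  show "0 < measure \<mu> (ball x0 r)"
  proof (cases "r < 1")
    case True then show ?thesis using x0_est(1) r by blast
  next
    case False
    have "0 < measure \<mu> (ball x0 (1/2))" using x0_est(1)[of "1/2"] by simp
    also have "\<dots> \<le> measure \<mu> (ball x0 r)"
      using False by (intro finite_measure.finite_measure_mono[OF prob_space.finite_measure[OF ps]])
        (auto simp: borel_mu)
    finally show ?thesis .
  qed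
qed

lemma x0_lim: "((\<lambda>r. ln (measure \<mu> (ball x0 r)) / ln r) \<longlongrightarrow> LL) (at_right 0)"
proof (rule LIM_zero_cancel)
  let ?K = "ln 7 + 2 * aa0"
  have glim: "((\<lambda>r. ?K / (- ln r)) \<longlongrightarrow> 0) (at_right 0)"
  proof (rule tendsto_divide_0[OF tendsto_const])
    have "LIM r at_right 0. - ln (r::real) :> at_top"
      using filterlim_compose[OF filterlim_uminus_at_top_at_bot ln_at_0] by simp
    then show "LIM r at_right 0. - ln (r::real) :> at_infinity" by (rule filterlim_at_top_imp_at_infinity)
  qed
  have ev: "\<forall>\<^sub>F r in at_right 0. norm (ln (measure \<mu> (ball x0 r)) / ln r - LL) \<le> ?K / (- ln r)"
  proof -
    have "\<forall>\<^sub>F r in at_right (0::real). 0 < r \<and> r < 1"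
      by (rule eventually_at_rightI[of 0 1]) auto
    then show ?thesis
    proof (rule eventually_mono)
      fix r :: real assume r: "0 < r \<and> r < 1"
      have lr: "ln r < 0" using r by simp
      have "ln (measure \<mu> (ball x0 r)) / ln r - LL = (ln (measure \<mu> (ball x0 r)) - LL * ln r) / ln r"
        using lr by (simp add: diff_divide_distrib)
      then have "norm (ln (measure \<mu> (ball x0 r)) / ln r - LL) = \<bar>ln (measure \<mu> (ball x0 r)) - LL * ln r\<bar> / \<bar>ln r\<bar>"
        by (simp add: abs_divide)
      also have "\<bar>ln r\<bar> = - ln r" using lr by simp
      finally have "norm (ln (measure \<mu> (ball x0 r)) / ln r - LL) = \<bar>ln (measure \<mu> (ball x0 r)) - LL * ln r\<bar> / (- ln r)" .
      also have "\<dots> \<le> ?K / (- ln r)"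
        using x0_est(2)[of r] r lr by (intro divide_right_mono) auto
      finally show "norm (ln (measure \<mu> (ball x0 r)) / ln r - LL) \<le> ?K / (- ln r)" .
    qed
  qed
  show "((\<lambda>r. ln (measure \<mu> (ball x0 r)) / ln r - LL) \<longlongrightarrow> 0) (at_right 0)"
    by (rule Lim_null_comparison[OF ev glim])
qed

lemma LL_lower:
  assumes x: "x \<in> msupp \<mu>" and lim: "((\<lambda>r. ln (measure \<mu> (ball x r)) / ln r) \<longlongrightarrow> L') (at_right 0)"
  shows "LL \<le> L'"
proof -
  let ?r = "\<lambda>k::nat. inverse (real d ^ k)"
  have d1: "1 < real d" using d3 by simp
  have e: "eventually (\<lambda>k. ?r k \<in> {0<..} \<and> ?r k \<noteq> 0) sequentially"
    using d3 by (intro always_eventually allI) simp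
  have rlim: "filterlim ?r (at_right 0) sequentially"
    unfolding filterlim_at using e LIMSEQ_inverse_realpow_zero[OF d1] by blast
  have f: "(\<lambda>k. ln (measure \<mu> (ball x (?r k))) / ln (?r k)) \<longlonglongrightarrow> L'"
    using filterlim_compose[OF lim rlim] .
  have g: "(\<lambda>k. LL - ln 7 / (real k * ln (real d))) \<longlonglongrightarrow> LL"
  proof -
    have "(\<lambda>k. ln 7 / (real k * ln (real d))) \<longlonglongrightarrow> 0"
    proof (rule tendsto_divide_0[OF tendsto_const])
      have "filterlim (\<lambda>k. real k * ln (real d)) at_top sequentially"
        by (rule filterlim_at_top_mult_tendsto_pos[OF tendsto_const ld_pos filterlim_real_sequentially])
      then show "filterlim (\<lambda>k. real k * ln (real d)) at_infinity sequentially"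
        by (rule filterlim_at_top_imp_at_infinity)
    qed
    from tendsto_diff[OF tendsto_const[of LL] this] show ?thesis by simp
  qed
  show ?thesis
  proof (rule LIMSEQ_le[OF g f], intro exI allI impI)
    fix k :: nat assume k: "1 \<le> k"
    have rk: "0 < ?r k" using d3 by simp
    have mpos: "0 < measure \<mu> (ball x (?r k))" using x rk unfolding msupp_def by auto
    have up: "measure \<mu> (ball x (?r k)) \<le> 7 * (zeta * q) ^ k"
      using ball_upper[OF rk, of k x] d3 by simp
    have "ln (measure \<mu> (ball x (?r k))) \<le> ln (7 * (zeta * q) ^ k)" using up mpos by simp
    also have "\<dots> = ln 7 - real k * aa0"
    proof -
      have h1: "ln (7 * (zeta * q) ^ k) = ln 7 + ln ((zeta * q) ^ k)" by (subst ln_mult) (use zq_pos in auto)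
      have h2: "ln ((zeta * q) ^ k) = real k * ln (zeta * q)" by (rule ln_realpow)
      show ?thesis unfolding h1 h2 aa0_def by simp
    qed
    finally have l: "ln (measure \<mu> (ball x (?r k))) \<le> ln 7 - real k * aa0" .
    have lr: "ln (?r k) = - (real k * ln (real d))" using d3 by (simp add: ln_inverse ln_realpow)
    have kd: "0 < real k * ln (real d)" using k ld_pos by simp
    have "LL - ln 7 / (real k * ln (real d)) = (ln 7 - real k * aa0) / ln (?r k)"
    proof -
      have k0: "real k \<noteq> 0" using k by simp
      have l0: "ln (real d) \<noteq> 0" using ld_pos by simp
      show ?thesis unfolding lr LL_def using k0 l0 by (simp add: field_simps)
    qed
    also have "\<dots> \<le> ln (measure \<mu> (ball x (?r k))) / ln (?r k)"
      using l kd unfolding lr by (intro divide_right_mono_neg) auto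
    finally show "LL - ln 7 / (real k * ln (real d)) \<le> ln (measure \<mu> (ball x (?r k))) / ln (?r k)" .
  qed
qed

lemma Inf_local_dims: "Inf (local_dims \<mu>) = LL"
proof (rule cInf_eq_minimum)
  show "LL \<in> local_dims \<mu>" unfolding local_dims_def using x0_msupp x0_lim by blast
next
  fix y assume "y \<in> local_dims \<mu>"
  then show "LL \<le> y" unfolding local_dims_def using LL_lower by blast
qed

lemma LL_eq: "LL = (ln (real d + 1) - ln zeta) / ln (real d)"
proof -
  have "ln (zeta * q) = ln zeta - ln (real d + 1)"
    using zeta_bounds unfolding q_def by (simp add: ln_div)
  then show ?thesis unfolding LL_def aa0_def by simp
qed

end


theorem proposition19:
  fixes d :: nat and \<mu> :: "real measure" and p :: "nat \<Rightarrow> real"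
  assumes "d \<ge> 3"
    and "\<And>i. p i = 1 / (real d + 1)"
    and "is_ssm d d p \<mu>"
  shows "Inf (local_dims \<mu>) = alpha_low d d p
    \<and> alpha_low d d p = (ln (real d + 1) - ln ((1 + sqrt 5) / 2)) / ln (real d)
    \<and> alpha_star d d p = alpha_up d p
    \<and> alpha_up d p = ln (real d + 1) / ln (real d)"
proof -
  interpret ctx2 d p \<mu>
    by unfold_locales (use assms in auto)
  show ?thesis
    using Inf_local_dims LL_eq alpha_low_eq alpha_star_eq alpha_up_eq unfolding zeta_def by simp
qed

end
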